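(* Let $X$ be a non-empty finite set and $\boldsymbol{\nu}$ a random probability measure on $X$ such that $(\boldsymbol{\nu}(x))_{x\in X}$ is exchangeable. Then for every $A\subset X$, $$\mathrm{Var}(\boldsymbol{\nu}(A))\le\frac{|A|}{|X|}\,\mathbb{E}\Big[\max_{x\in X}\boldsymbol{\nu}(x)\Big].$$
   Context: Exchangeable means the law of the collection is invariant under permutations of $X$. *)

theory Defs
  imports "HOL-Probability.Probability"
begin

definition random_prob_measure :: "'m measure \<Rightarrow> 'a set \<Rightarrow> ('m \<Rightarrow> 'a \<Rightarrow> real) \<Rightarrow> bool" where
  "random_prob_measure M X nu \<longleftrightarrow>
     (\<forall>x\<in>X. (\<lambda>w. nu w x) \<in> borel_measurable M) \<and>
     (\<forall>w\<in>space M. (\<forall>x\<in>X. 0 \<le> nu w x) \<and> (\<Sum>x\<in>X. nu w x) = 1)"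

definition exchangeable :: "'m measure \<Rightarrow> 'a set \<Rightarrow> ('m \<Rightarrow> 'a \<Rightarrow> real) \<Rightarrow> bool" where
  "exchangeable M X nu \<longleftrightarrow>
     (\<forall>\<sigma>. \<sigma> permutes X \<longrightarrow>
        distr M (PiM X (\<lambda>_. borel)) (\<lambda>w. \<lambda>x\<in>X. nu w (\<sigma> x))
        = distr M (PiM X (\<lambda>_. borel)) (\<lambda>w. \<lambda>x\<in>X. nu w x))"

end

theory Submission
  imports Defs
begin

lemma rpm_bounds:
  assumes "finite X" "random_prob_measure M X nu" "w \<in> space M" "x \<in> X"
  shows "0 \<le> nu w x" "nu w x \<le> 1"
proof -
  have h: "\<forall>x\<in>X. 0 \<le> nu w x" "(\<Sum>x\<in>X. nu w x) = 1"
    using assms(2,3) unfolding random_prob_measure_def by auto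
  show "0 \<le> nu w x" using h assms(4) by auto
  have "nu w x \<le> (\<Sum>x\<in>X. nu w x)"
    by (rule member_le_sum) (use h assms in auto)
  then show "nu w x \<le> 1" using h by simp
qed

lemma rpm_meas:
  assumes "random_prob_measure M X nu" "x \<in> X"
  shows "(\<lambda>w. nu w x) \<in> borel_measurable M"
  using assms unfolding random_prob_measure_def by auto

lemma rpm_int:
  assumes "prob_space M" "finite X" "random_prob_measure M X nu" "x \<in> X" "y \<in> X"
  shows "integrable M (\<lambda>w. nu w x * nu w y)" "integrable M (\<lambda>w. nu w x)"
proof -
  interpret prob_space M by fact
  show "integrable M (\<lambda>w. nu w x * nu w y)"
  proof (rule integrable_const_bound[where B=1])
    show "AE w in M. norm (nu w x * nu w y) \<le> 1"
    proof (rule AE_I2)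
      fix w assume w: "w \<in> space M"
      have "0 \<le> nu w x" "nu w x \<le> 1" "0 \<le> nu w y" "nu w y \<le> 1"
        using rpm_bounds[OF assms(2,3) w] assms(4,5) by auto
      then show "norm (nu w x * nu w y) \<le> 1"
        by (simp add: abs_mult mult_le_one)
    qed
    show "(\<lambda>w. nu w x * nu w y) \<in> borel_measurable M"
      using rpm_meas[OF assms(3)] assms(4,5) by measurable
  qed
  show "integrable M (\<lambda>w. nu w x)"
  proof (rule integrable_const_bound[where B=1])
    show "AE w in M. norm (nu w x) \<le> 1"
      using rpm_bounds[OF assms(2,3)] assms(4) by (intro AE_I2) auto
    show "(\<lambda>w. nu w x) \<in> borel_measurable M"
      using rpm_meas[OF assms(3)] assms(4) by measurable
  qed
qed

lemma exch_pair:
  fixes M :: "'m measure" and X :: "'a set" and nu :: "'m \<Rightarrow> 'a \<Rightarrow> real"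
  assumes "prob_space M" "finite X" "random_prob_measure M X nu" "exchangeable M X nu"
    and s: "\<sigma> permutes X" and "x \<in> X" "y \<in> X"
  shows "(\<integral>w. nu w (\<sigma> x) * nu w (\<sigma> y) \<partial>M) = (\<integral>w. nu w x * nu w y \<partial>M)"
proof -
  let ?N = "PiM X (\<lambda>_. borel) :: ('a \<Rightarrow> real) measure"
  define g where "g = (\<lambda>f::'a \<Rightarrow> real. f x * f y)"
  have gm: "g \<in> borel_measurable ?N"
    unfolding g_def using assms(6,7) by measurable
  have m1: "(\<lambda>w. \<lambda>z\<in>X. nu w (\<sigma> z)) \<in> measurable M ?N"
    apply (rule measurable_restrict)
    using rpm_meas[OF assms(3)] permutes_in_image[OF s] by auto
  have m2: "(\<lambda>w. \<lambda>z\<in>X. nu w z) \<in> measurable M ?N"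
    apply (rule measurable_restrict)
    using rpm_meas[OF assms(3)] by auto
  have e: "distr M ?N (\<lambda>w. \<lambda>z\<in>X. nu w (\<sigma> z)) = distr M ?N (\<lambda>w. \<lambda>z\<in>X. nu w z)"
    using assms(4) s unfolding exchangeable_def by auto
  have "(\<integral>w. g (\<lambda>z\<in>X. nu w (\<sigma> z)) \<partial>M) = (\<integral>f. g f \<partial>distr M ?N (\<lambda>w. \<lambda>z\<in>X. nu w (\<sigma> z)))"
    by (rule integral_distr[OF m1 gm, symmetric])
  also have "\<dots> = (\<integral>f. g f \<partial>distr M ?N (\<lambda>w. \<lambda>z\<in>X. nu w z))" by (simp only: e)
  also have "\<dots> = (\<integral>w. g (\<lambda>z\<in>X. nu w z) \<partial>M)"
    by (rule integral_distr[OF m2 gm])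
  finally show ?thesis unfolding g_def using assms(6,7) by simp
qed

lemma exch_single:
  fixes M :: "'m measure" and X :: "'a set" and nu :: "'m \<Rightarrow> 'a \<Rightarrow> real"
  assumes "prob_space M" "finite X" "random_prob_measure M X nu" "exchangeable M X nu"
    and s: "\<sigma> permutes X" and "x \<in> X"
  shows "(\<integral>w. nu w (\<sigma> x) \<partial>M) = (\<integral>w. nu w x \<partial>M)"
proof -
  let ?N = "PiM X (\<lambda>_. borel) :: ('a \<Rightarrow> real) measure"
  define g where "g = (\<lambda>f::'a \<Rightarrow> real. f x)"
  have gm: "g \<in> borel_measurable ?N"
    unfolding g_def using assms(6) by measurable
  have m1: "(\<lambda>w. \<lambda>z\<in>X. nu w (\<sigma> z)) \<in> measurable M ?N"
    apply (rule measurable_restrict)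
    using rpm_meas[OF assms(3)] permutes_in_image[OF s] by auto
  have m2: "(\<lambda>w. \<lambda>z\<in>X. nu w z) \<in> measurable M ?N"
    apply (rule measurable_restrict)
    using rpm_meas[OF assms(3)] by auto
  have e: "distr M ?N (\<lambda>w. \<lambda>z\<in>X. nu w (\<sigma> z)) = distr M ?N (\<lambda>w. \<lambda>z\<in>X. nu w z)"
    using assms(4) s unfolding exchangeable_def by auto
  have "(\<integral>w. g (\<lambda>z\<in>X. nu w (\<sigma> z)) \<partial>M) = (\<integral>f. g f \<partial>distr M ?N (\<lambda>w. \<lambda>z\<in>X. nu w (\<sigma> z)))"
    by (rule integral_distr[OF m1 gm, symmetric])
  also have "\<dots> = (\<integral>f. g f \<partial>distr M ?N (\<lambda>w. \<lambda>z\<in>X. nu w z))" by (simp only: e)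
  also have "\<dots> = (\<integral>w. g (\<lambda>z\<in>X. nu w z) \<partial>M)"
    by (rule integral_distr[OF m2 gm])
  finally show ?thesis unfolding g_def using assms(6) by simp
qed

theorem lemma6p3:
  fixes M :: "'m measure" and X A :: "'a set" and nu :: "'m \<Rightarrow> 'a \<Rightarrow> real"
  assumes "prob_space M"
    and "finite X" and "X \<noteq> {}"
    and "random_prob_measure M X nu"
    and "exchangeable M X nu"
    and "A \<subseteq> X"
  shows "prob_space.variance M (\<lambda>w. \<Sum>x\<in>A. nu w x)
           \<le> real (card A) / real (card X) * prob_space.expectation M (\<lambda>w. Max ((nu w) ` X))"
proof -
  interpret prob_space M by fact
  note fin = assms(2) and rpm = assms(4) and exch = assms(5)
  have finA: "finite A" using assms(6) fin finite_subset by blast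
  define n where "n = card X"
  define k where "k = card A"
  have n1: "n \<ge> 1" using fin assms(3) n_def by (simp add: Suc_le_eq card_gt_0_iff)
  have kn: "k \<le> n" unfolding k_def n_def using card_mono[OF fin assms(6)] .
  define c where "c = (\<lambda>x y. \<integral>w. nu w x * nu w y \<partial>M)"
  have intp: "integrable M (\<lambda>w. nu w x * nu w y)" if "x \<in> X" "y \<in> X" for x y
    using rpm_int[OF assms(1) fin rpm that] by simp
  have ints: "integrable M (\<lambda>w. nu w x)" if "x \<in> X" for x
    using rpm_int[OF assms(1) fin rpm that that] by simp
  have sum1: "(\<Sum>x\<in>X. nu w x) = 1" if "w \<in> space M" for w
    using rpm that unfolding random_prob_measure_def by auto
  have nn: "0 \<le> nu w x" if "w \<in> space M" "x \<in> X" for w x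
    using rpm_bounds[OF fin rpm that] by simp
  obtain x0 where x0: "x0 \<in> X" using assms(3) by blast
  have meq: "(\<integral>w. nu w x \<partial>M) = (\<integral>w. nu w x0 \<partial>M)" if "x \<in> X" for x
  proof -
    have "(\<integral>w. nu w (Transposition.transpose x0 x x) \<partial>M) = (\<integral>w. nu w x \<partial>M)"
      by (rule exch_single[OF assms(1) fin rpm exch permutes_swap_id[OF x0 that] that])
    then show ?thesis by simp
  qed
  have "(\<integral>w. (\<Sum>x\<in>X. nu w x) \<partial>M) = (\<Sum>x\<in>X. \<integral>w. nu w x \<partial>M)"
    by (rule Bochner_Integration.integral_sum[of X M "\<lambda>x w. nu w x"]) (rule ints)
  moreover have "(\<integral>w. (\<Sum>x\<in>X. nu w x) \<partial>M) = (\<integral>w. 1 \<partial>M)"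
    by (rule Bochner_Integration.integral_cong) (auto simp: sum1)
  ultimately have "(\<Sum>x\<in>X. \<integral>w. nu w x \<partial>M) = 1" by (simp add: prob_space)
  then have "real n * (\<integral>w. nu w x0 \<partial>M) = 1" using meq n_def by simp
  then have m0: "(\<integral>w. nu w x0 \<partial>M) = 1 / real n" using n1 by (simp add: field_simps)
  define a where "a = c x0 x0"
  have aeq: "c x x = a" if "x \<in> X" for x
  proof -
    have "c (Transposition.transpose x0 x x) (Transposition.transpose x0 x x) = c x x"
      unfolding c_def by (rule exch_pair[OF assms(1) fin rpm exch permutes_swap_id[OF x0 that] that that])
    then show ?thesis by (simp add: a_def)
  qed
  have a_ge: "a \<ge> 1 / (real n)^2"
  proof -
    have "integrable M (\<lambda>w. (nu w x0)^2)" using intp[OF x0 x0] by (simp add: power2_eq_square)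
    then have "variance (\<lambda>w. nu w x0) = expectation (\<lambda>w. (nu w x0)^2) - (expectation (\<lambda>w. nu w x0))^2"
      by (intro variance_eq ints x0)
    also have "\<dots> = a - (1 / real n)^2"
      unfolding a_def c_def m0 by (simp add: power2_eq_square)
    finally show ?thesis using variance_positive[of "\<lambda>w. nu w x0"] by (simp add: power_divide)
  qed
  have intmax: "integrable M (\<lambda>w. Max ((nu w) ` X))"
  proof (rule integrable_const_bound[where B=1])
    show "AE w in M. norm (Max ((nu w) ` X)) \<le> 1"
    proof (rule AE_I2)
      fix w assume w: "w \<in> space M"
      have "Max ((nu w) ` X) \<in> (nu w) ` X" using fin assms(3) by (intro Max_in) auto
      then obtain x where "x \<in> X" "Max ((nu w) ` X) = nu w x" by auto
      then show "norm (Max ((nu w) ` X)) \<le> 1" using rpm_bounds[OF fin rpm w] by auto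
    qed
    show "(\<lambda>w. Max ((nu w) ` X)) \<in> borel_measurable M"
      using borel_measurable_Max[OF fin, of "\<lambda>x w. nu w x" M] rpm_meas[OF rpm] by simp
  qed
  have na: "real n * a \<le> expectation (\<lambda>w. Max ((nu w) ` X))"
  proof -
    have "real n * a = (\<Sum>x\<in>X. c x x)" using aeq n_def by simp
    also have "\<dots> = (\<integral>w. (\<Sum>x\<in>X. nu w x * nu w x) \<partial>M)"
      unfolding c_def by (rule Bochner_Integration.integral_sum[symmetric]) (rule intp; simp)
    also have "\<dots> \<le> expectation (\<lambda>w. Max ((nu w) ` X))"
    proof (rule integral_mono)
      show "integrable M (\<lambda>w. \<Sum>x\<in>X. nu w x * nu w x)" by (rule Bochner_Integration.integrable_sum) (rule intp; simp)
      show "integrable M (\<lambda>w. Max ((nu w) ` X))" by (rule intmax)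
      fix w assume w: "w \<in> space M"
      have "(\<Sum>x\<in>X. nu w x * nu w x) \<le> (\<Sum>x\<in>X. nu w x * Max ((nu w) ` X))"
      proof (rule sum_mono)
        fix x assume x: "x \<in> X"
        have "nu w x \<le> Max ((nu w) ` X)" using fin x by (intro Max_ge) auto
        then show "nu w x * nu w x \<le> nu w x * Max ((nu w) ` X)"
          using nn[OF w x] by (intro mult_left_mono)
      qed
      also have "\<dots> = Max ((nu w) ` X)" by (simp add: sum_distrib_right[symmetric] sum1[OF w])
      finally show "(\<Sum>x\<in>X. nu w x * nu w x) \<le> Max ((nu w) ` X)" .
    qed
    finally show ?thesis .
  qed
  have ES: "expectation (\<lambda>w. \<Sum>x\<in>A. nu w x) = real k / real n"
  proof -
    have "expectation (\<lambda>w. \<Sum>x\<in>A. nu w x) = (\<Sum>x\<in>A. \<integral>w. nu w x \<partial>M)"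
      by (rule Bochner_Integration.integral_sum[of A M "\<lambda>x w. nu w x"]) (use assms(6) ints in blast)
    also have "\<dots> = real k / real n" using meq assms(6) m0 k_def by (simp add: subset_iff)
    finally show ?thesis .
  qed
  have sqsum: "(\<Sum>x\<in>B. nu w x)^2 = (\<Sum>x\<in>B. \<Sum>y\<in>B. nu w x * nu w y)" for B w
    by (simp add: power2_eq_square sum_product)
  have ES2: "expectation (\<lambda>w. (\<Sum>x\<in>B. nu w x)^2) = (\<Sum>x\<in>B. \<Sum>y\<in>B. c x y)"
    and intS2: "integrable M (\<lambda>w. (\<Sum>x\<in>B. nu w x)^2)" if "B \<subseteq> X" for B
  proof -
    have i2: "integrable M (\<lambda>w. \<Sum>y\<in>B. nu w x * nu w y)" if "x \<in> B" for x
      using \<open>B \<subseteq> X\<close> that by (intro Bochner_Integration.integrable_sum intp) auto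
    show "expectation (\<lambda>w. (\<Sum>x\<in>B. nu w x)^2) = (\<Sum>x\<in>B. \<Sum>y\<in>B. c x y)"
      unfolding sqsum c_def
      apply (subst Bochner_Integration.integral_sum) apply (rule i2, assumption)
      apply (rule sum.cong, rule refl)
      apply (rule Bochner_Integration.integral_sum) using \<open>B \<subseteq> X\<close> by (intro intp) auto
    show "integrable M (\<lambda>w. (\<Sum>x\<in>B. nu w x)^2)" unfolding sqsum
      by (intro Bochner_Integration.integrable_sum i2)
  qed
  have intS: "integrable M (\<lambda>w. \<Sum>x\<in>A. nu w x)"
    by (rule Bochner_Integration.integrable_sum[of A M "\<lambda>x w. nu w x"]) (use assms(6) ints in blast)
  have var: "variance (\<lambda>w. \<Sum>x\<in>A. nu w x) = (\<Sum>x\<in>A. \<Sum>y\<in>A. c x y) - (real k / real n)^2"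
    apply (subst variance_eq)
    using assms(6) intS intS2[OF assms(6)] ES2[OF assms(6)] ES by (auto intro: Bochner_Integration.integrable_sum)
  have Emax_ge: "real k * a \<le> real k / real n * expectation (\<lambda>w. Max ((nu w) ` X))"
  proof -
    have "real k * a = real k / real n * (real n * a)" using n1 by simp
    also have "\<dots> \<le> real k / real n * expectation (\<lambda>w. Max ((nu w) ` X))"
      by (rule mult_left_mono[OF na]) simp
    finally show ?thesis .
  qed
  show ?thesis
  proof (cases "k \<le> 1")
    case True
    have "(\<Sum>x\<in>A. \<Sum>y\<in>A. c x y) = real k * a"
    proof (cases "k = 0")
      case True then have "A = {}" using finA k_def by simp
      then show ?thesis using True by simp
    next
      case False then have "k = 1" using \<open>k \<le> 1\<close> by simp
      then obtain x where "A = {x}" using k_def card_1_singletonE by metis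
      then show ?thesis using aeq assms(6) \<open>k = 1\<close> by simp
    qed
    then show ?thesis using var Emax_ge k_def n_def
      by (smt (verit) zero_le_power2)
  next
    case False
    then have k2: "k \<ge> 2" by simp
    then have n2: "n \<ge> 2" using kn by simp
    then have "card X \<ge> 2" using n_def by simp
    then obtain y0 where y0: "y0 \<in> X" "y0 \<noteq> x0"
      using x0 fin by (metis One_nat_def card_le_Suc0_iff_eq not_less_eq_eq numeral_2_eq_2)
    define b where "b = c x0 y0"
    have beq: "c x y = b" if xy: "x \<in> X" "y \<in> X" "x \<noteq> y" for x y
    proof -
      define y1 where "y1 = Transposition.transpose x0 x y0"
      define \<sigma> where "\<sigma> = Transposition.transpose y1 y \<circ> Transposition.transpose x0 x"
      have y1X: "y1 \<in> X" unfolding y1_def using x0 y0 xy by (auto simp: Transposition.transpose_def)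
      have "x \<noteq> y1" unfolding y1_def using y0 by (auto simp: Transposition.transpose_def)
      then have s1: "\<sigma> x0 = x" using xy unfolding \<sigma>_def by (auto simp: Transposition.transpose_def)
      have s2: "\<sigma> y0 = y" unfolding \<sigma>_def y1_def by simp
      have "\<sigma> permutes X" unfolding \<sigma>_def
        by (intro permutes_compose permutes_swap_id x0 xy y1X)
      from exch_pair[OF assms(1) fin rpm exch this x0 y0(1)]
      show ?thesis using s1 s2 unfolding b_def c_def by simp
    qed
    have rowsum: "(\<Sum>y\<in>B. c x y) = a + (real (card B) - 1) * b" if "B \<subseteq> X" "x \<in> B" for B x
    proof -
      have fB: "finite B" using that fin finite_subset by blast
      have "(\<Sum>y\<in>B. c x y) = c x x + (\<Sum>y\<in>B - {x}. c x y)"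
        using sum.remove[OF fB that(2)] by simp
      also have "(\<Sum>y\<in>B - {x}. c x y) = (\<Sum>y\<in>B - {x}. b)"
        using that by (intro sum.cong refl beq) auto
      also have "\<dots> = (real (card B) - 1) * b"
      proof -
        have "card B \<ge> 1" using fB that(2) card_gt_0_iff[of B] by auto
        then show ?thesis using fB that(2) by (simp add: card_Diff_singleton of_nat_diff)
      qed
      finally show ?thesis using aeq that by auto
    qed
    have dsum: "(\<Sum>x\<in>B. \<Sum>y\<in>B. c x y) = real (card B) * (a + (real (card B) - 1) * b)"
      if "B \<subseteq> X" for B
      using rowsum[OF that] by simp
    have "(\<Sum>x\<in>X. \<Sum>y\<in>X. c x y) = expectation (\<lambda>w. (\<Sum>x\<in>X. nu w x)^2)"
      using ES2[of X] by simp
    also have "\<dots> = expectation (\<lambda>w. 1)"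
      by (rule Bochner_Integration.integral_cong) (auto simp: sum1)
    finally have tot: "real n * (a + (real n - 1) * b) = 1" using dsum[of X] n_def by (simp add: prob_space)
    have b0: "b \<ge> 0" unfolding b_def c_def
      by (rule Bochner_Integration.integral_nonneg) (use nn x0 y0 in auto)
    have "real n * (real n - 1) * b = 1 - real n * a" using tot by (simp add: algebra_simps)
    also have "\<dots> \<le> 1 - 1 / real n"
      using a_ge n1 mult_left_mono[OF a_ge, of "real n"] by (simp add: power2_eq_square)
    also have "\<dots> = real n * (real n - 1) * (1 / (real n)^2)"
      using n1 by (simp add: field_simps power2_eq_square)
    finally have "b \<le> 1 / (real n)^2" using n2
      by (subst (asm) mult_le_cancel_left_pos) auto
    then have "real k * (real k - 1) * b \<le> (real k)^2 * (1 / (real n)^2)"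
      using b0 k2 by (intro mult_mono) (auto simp: power2_eq_square)
    then have "real k * (real k - 1) * b \<le> (real k / real n)^2"
      by (simp add: power_divide)
    moreover have "variance (\<lambda>w. \<Sum>x\<in>A. nu w x) = real k * a + real k * (real k - 1) * b - (real k / real n)^2"
      using var dsum[OF assms(6)] k_def by (simp add: algebra_simps)
    ultimately have "variance (\<lambda>w. \<Sum>x\<in>A. nu w x) \<le> real k / real n * expectation (\<lambda>w. Max ((nu w) ` X))"
      using Emax_ge by linarith
    then show ?thesis using k_def n_def by simp
  qed
qed

end
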